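(* Let $d\ge2$ and $a\in\mathbb{Z}_n^*$. Then: (1) if $a\ne1$, then $|\mathrm{Fix}(a,\mathcal{Y}_{\mathrm{gen}})|\le n^{d-1}$; (2) if $a^2\ne1$, then $|\mathrm{Fix}(a,\mathcal{Y}_{\mathrm{gen}})|\le n^{d-2}$.
   Context: $\mathcal{Y}_{\mathrm{gen}}$ is the set of $d$-element subsets of $\mathbb{Z}_n$ that generate $\mathbb{Z}_n$. The unit group $\mathbb{Z}_n^*$ acts on it by $A\mapsto aA=\{ax:x\in A\}$, and $\mathrm{Fix}(a,\mathcal{Y}_{\mathrm{gen}})=\{A\in\mathcal{Y}_{\mathrm{gen}}:aA=A\}$. *)

theory Defs
  imports Main
begin

definition Zn :: "nat \<Rightarrow> nat set" where
  "Zn n = {0..<n}"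

definition units_Zn :: "nat \<Rightarrow> nat set" where
  "units_Zn n = {a \<in> Zn n. coprime a n}"

definition gen_subgroup :: "nat \<Rightarrow> nat set \<Rightarrow> nat set" where
  "gen_subgroup n A = {nat ((\<Sum>x\<in>A. c x * int x) mod int n) | c. True}"

definition generates :: "nat \<Rightarrow> nat set \<Rightarrow> bool" where
  "generates n A \<longleftrightarrow> gen_subgroup n A = Zn n"

definition Y_gen :: "nat \<Rightarrow> nat \<Rightarrow> nat set set" where
  "Y_gen n d = {A. A \<subseteq> Zn n \<and> card A = d \<and> generates n A}"

definition smul :: "nat \<Rightarrow> nat \<Rightarrow> nat set \<Rightarrow> nat set" where
  "smul n a A = (\<lambda>x. (a * x) mod n) ` A"

definition Fix :: "nat \<Rightarrow> nat \<Rightarrow> nat \<Rightarrow> nat set set" where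
  "Fix n d a = {A \<in> Y_gen n d. smul n a A = A}"

end

theory Submission
  imports Defs "HOL-Number_Theory.Cong"
begin

lemma subsets_card_le: "card {B. B \<subseteq> Zn n \<and> card B = k} \<le> n ^ k"
proof -
  have "card {B. B \<subseteq> Zn n \<and> card B = k} = n choose k"
    using n_subsets[of "Zn n" k] by (simp add: Zn_def)
  also have "\<dots> \<le> (n choose k) * fact k" by simp
  also have "\<dots> \<le> n ^ k" by (rule binomial_fact_pow)
  finally show ?thesis .
qed

lemma fix_all_imp:
  assumes "finite A" "generates n A" "\<forall>x\<in>A. (b*x) mod n = x" "n \<ge> 2"
  shows "b mod n = 1 mod n"
proof -
  have "1 \<in> Zn n" using assms(4) by (simp add: Zn_def)
  then have "1 \<in> gen_subgroup n A" using assms(2) by (simp add: generates_def)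
  then obtain c where c: "1 = nat ((\<Sum>x\<in>A. c x * int x) mod int n)"
    unfolding gen_subgroup_def by auto
  define S where "S = (\<Sum>x\<in>A. c x * int x)"
  have S0: "0 \<le> S mod int n" using assms(4) by simp
  have S1: "S mod int n = 1" using c S0 unfolding S_def by (metis nat_0_le of_nat_1)
  have S1': "[S = 1] (mod int n)" using S1 assms(4) by (simp add: cong_def)
  have "[int b * S = (\<Sum>x\<in>A. c x * (int b * int x))] (mod int n)"
    unfolding S_def by (simp add: sum_distrib_left algebra_simps)
  also have "[(\<Sum>x\<in>A. c x * (int b * int x)) = (\<Sum>x\<in>A. c x * int x)] (mod int n)"
  proof (rule cong_sum)
    fix x assume "x \<in> A"
    then have "(b*x) mod n = x" using assms(3) by auto
    then have "[b * x = x] (mod n)" by (metis cong_def mod_mod_trivial)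
    then have "[int b * int x = int x] (mod int n)"
      using cong_int_iff[of "b*x" x n] by simp
    then show "[c x * (int b * int x) = c x * int x] (mod int n)"
      by (rule cong_scalar_left)
  qed
  finally have "[int b * S = S] (mod int n)" unfolding S_def .
  moreover have "[int b * 1 = int b * S] (mod int n)"
    using cong_scalar_left[OF cong_sym[OF S1']] by simp
  ultimately have "[int b * 1 = 1] (mod int n)"
    using S1' cong_trans by blast
  then have "[b = 1] (mod n)"
    using cong_int_iff[of b 1 n] by simp
  then show ?thesis by (simp add: cong_def)
qed

lemma Fix_props:
  assumes "A \<in> Fix n d a"
  shows "A \<subseteq> Zn n" "card A = d" "generates n A" "\<And>x. x \<in> A \<Longrightarrow> (a*x) mod n \<in> A"
  using assms unfolding Fix_def Y_gen_def smul_def by auto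

theorem lemma5p3:
  fixes n d a :: nat
  assumes "d \<ge> 2" and "a \<in> units_Zn n"
  shows "(a \<noteq> 1 mod n \<longrightarrow> card (Fix n d a) \<le> n ^ (d - 1))
       \<and> ((a ^ 2) mod n \<noteq> 1 mod n \<longrightarrow> card (Fix n d a) \<le> n ^ (d - 2))"
proof (cases "n \<ge> 2")
  case False
  then have "n = 0 \<or> n = 1" by auto
  moreover have "a < n" using assms(2) by (simp add: units_Zn_def Zn_def)
  ultimately have "n = 1" "a = 0" by auto
  then show ?thesis by simp
next
  case n2: True
  have an: "a < n" and cop: "coprime a n" using assms(2) by (simp_all add: units_Zn_def Zn_def)
  have finA: "finite A" if "A \<in> Fix n d a" for A
    using Fix_props(1)[OF that] unfolding Zn_def by (rule finite_subset) simp
  have finS: "finite {B. B \<subseteq> Zn n \<and> card B = k}" for k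
    by (rule finite_subset[of _ "Pow (Zn n)"]) (auto simp: Zn_def)
  have finX: "finite (Zn n \<times> {B. B \<subseteq> Zn n \<and> card B = k})" for k
    using finS by (simp add: Zn_def)
  have P1: "card (Fix n d a) \<le> n ^ (d - 1)" if ne: "a \<noteq> 1 mod n"
  proof -
    let ?f = "\<lambda>(x,B). insert x (insert ((a*x) mod n) B)"
    have "Fix n d a \<subseteq> ?f ` (Zn n \<times> {B. B \<subseteq> Zn n \<and> card B = d - 2})"
    proof
      fix A assume A: "A \<in> Fix n d a"
      note P = Fix_props[OF A]
      have "\<exists>x\<in>A. (a*x) mod n \<noteq> x"
      proof (rule ccontr)
        assume "\<not> ?thesis"
        then have "a mod n = 1 mod n" using fix_all_imp[OF finA[OF A] P(3) _ n2] by auto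
        then show False using ne an by simp
      qed
      then obtain x where x: "x \<in> A" "(a*x) mod n \<noteq> x" by auto
      define y where "y = (a*x) mod n"
      have y: "y \<in> A" using P(4)[OF x(1)] y_def by simp
      define B where "B = A - {x, y}"
      have "card B = d - 2" unfolding B_def using x y y_def P(2) finA[OF A]
        by (simp add: card_Diff_subset)
      moreover have "B \<subseteq> Zn n" using P(1) B_def by auto
      moreover have "x \<in> Zn n" using P(1) x by auto
      moreover have "A = ?f (x, B)" using x y unfolding B_def y_def by auto
      ultimately show "A \<in> ?f ` (Zn n \<times> {B. B \<subseteq> Zn n \<and> card B = d - 2})" by blast
    qed
    then have "card (Fix n d a) \<le> card (Zn n \<times> {B. B \<subseteq> Zn n \<and> card B = d - 2})"
        by (rule le_trans[OF card_mono[OF finite_imageI[OF finX]] card_image_le[OF finX]])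
    also have "\<dots> = n * card {B. B \<subseteq> Zn n \<and> card B = d - 2}"
      by (simp add: card_cartesian_product Zn_def)
    also have "\<dots> \<le> n * n ^ (d - 2)" using subsets_card_le by simp
    also have "\<dots> = n ^ (d - 1)" using assms(1)
      proof - have "d - 1 = Suc (d - 2)" using assms(1) by simp then show ?thesis by simp qed
    finally show ?thesis .
  qed
  have P2: "card (Fix n d a) \<le> n ^ (d - 2)" if ne: "(a^2) mod n \<noteq> 1 mod n"
  proof -
    have three: "\<exists>x. x \<in> A \<and> (a*x) mod n \<in> A \<and> (a*((a*x) mod n)) mod n \<in> A \<and>
       distinct [x, (a*x) mod n, (a*((a*x) mod n)) mod n]" if A: "A \<in> Fix n d a" for A
    proof -
      note P = Fix_props[OF A]
      have "\<exists>x\<in>A. (a^2*x) mod n \<noteq> x"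
      proof (rule ccontr)
        assume "\<not> ?thesis"
        then have "(a^2) mod n = 1 mod n" using fix_all_imp[OF finA[OF A] P(3) _ n2] by auto
        then show False using ne by simp
      qed
      then obtain x where x: "x \<in> A" "(a^2*x) mod n \<noteq> x" by auto
      define y where "y = (a*x) mod n"
      define z where "z = (a*y) mod n"
      have y: "y \<in> A" using P(4)[OF x(1)] y_def by simp
      have z: "z \<in> A" using P(4)[OF y] z_def by simp
      have zx: "z = (a^2*x) mod n" unfolding z_def y_def
        by (simp add: mod_mult_right_eq power2_eq_square mult.assoc)
      have xlt: "x < n" and ylt: "y < n" using P(1) x y by (auto simp: Zn_def)
      have xy: "x \<noteq> y"
      proof
        assume "x = y"
        then have "z = y" using z_def y_def by simp
        then show False using zx x(2) \<open>x = y\<close> by simp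
      qed
      have yz: "y \<noteq> z"
      proof
        assume "y = z"
        then have "[a*x = a*y] (mod n)" unfolding cong_def z_def y_def by simp
        then have "[x = y] (mod n)" using cong_mult_lcancel_nat cop by blast
        then show False using xy xlt ylt by (simp add: cong_def)
      qed
      have xz: "x \<noteq> z" using zx x(2) by simp
      show ?thesis using x y z xy yz xz y_def z_def by auto
    qed
    show ?thesis
    proof (cases "d = 2")
      case True
      have "Fix n d a = {}"
      proof (rule ccontr)
        assume "Fix n d a \<noteq> {}"
        then obtain A where A: "A \<in> Fix n d a" by auto
        then obtain x where x: "x \<in> A \<and> (a*x) mod n \<in> A \<and> (a*((a*x) mod n)) mod n \<in> A \<and>
          distinct [x, (a*x) mod n, (a*((a*x) mod n)) mod n]" using three by blast
        have "{x, (a*x) mod n, (a*((a*x) mod n)) mod n} \<subseteq> A" using x by auto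
        then have "card {x, (a*x) mod n, (a*((a*x) mod n)) mod n} \<le> card A"
          using finA[OF A] card_mono by blast
        then show False using x Fix_props(2)[OF A] True by simp
      qed
      then show ?thesis by simp
    next
      case False
      then have d3: "d \<ge> 3" using assms(1) by simp
      let ?f = "\<lambda>(x,B). insert x (insert ((a*x) mod n) (insert ((a*((a*x) mod n)) mod n) B))"
      have "Fix n d a \<subseteq> ?f ` (Zn n \<times> {B. B \<subseteq> Zn n \<and> card B = d - 3})"
      proof
        fix A assume A: "A \<in> Fix n d a"
        note P = Fix_props[OF A]
        obtain x where x: "x \<in> A \<and> (a*x) mod n \<in> A \<and> (a*((a*x) mod n)) mod n \<in> A \<and>
          distinct [x, (a*x) mod n, (a*((a*x) mod n)) mod n]" using three[OF A] by blast
        define B where "B = A - {x, (a*x) mod n, (a*((a*x) mod n)) mod n}"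
        have "card B = d - 3" unfolding B_def using x P(2) finA[OF A]
          by (simp add: card_Diff_subset)
        moreover have "B \<subseteq> Zn n" using P(1) B_def by auto
        moreover have "x \<in> Zn n" using P(1) x by auto
        moreover have "A = ?f (x, B)" using x unfolding B_def by auto
        ultimately show "A \<in> ?f ` (Zn n \<times> {B. B \<subseteq> Zn n \<and> card B = d - 3})" by blast
      qed
      then have "card (Fix n d a) \<le> card (Zn n \<times> {B. B \<subseteq> Zn n \<and> card B = d - 3})"
        by (rule le_trans[OF card_mono[OF finite_imageI[OF finX]] card_image_le[OF finX]])
      also have "\<dots> = n * card {B. B \<subseteq> Zn n \<and> card B = d - 3}"
        by (simp add: card_cartesian_product Zn_def)
      also have "\<dots> \<le> n * n ^ (d - 3)" using subsets_card_le by simp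
      also have "\<dots> = n ^ (d - 2)" using d3
        proof - have "d - 2 = Suc (d - 3)" using d3 by simp then show ?thesis by simp qed
      finally show ?thesis .
    qed
  qed
  show ?thesis using P1 P2 by blast
qed

end
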